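(* Let $\varepsilon>0$ be a constant, let $C=12/\varepsilon$, and let $G=(V,E)$ be a graph on $n$ vertices with $\delta(G)\geq\left(\frac12+\varepsilon\right)n$. Then, for all sufficiently large $n$, there exists a set $L\subseteq V$ with $|L|\leq C\log n$ such that every pair of distinct vertices $u,v\in V\setminus L$ has at least $12\log n$ common $G$-neighbors in $L$.
   Context: $\log$ denotes the natural logarithm. *)

theory Defs
  imports Complex_Main
begin

definition simple_graph :: "nat set \<Rightarrow> (nat \<Rightarrow> nat \<Rightarrow> bool) \<Rightarrow> bool" where
  "simple_graph V E \<longleftrightarrow> finite V \<and> (\<forall>u v. E u v \<longrightarrow> u \<in> V \<and> v \<in> V)
     \<and> (\<forall>u v. E u v \<longrightarrow> E v u) \<and> (\<forall>u. \<not> E u u)"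

definition degree :: "nat set \<Rightarrow> (nat \<Rightarrow> nat \<Rightarrow> bool) \<Rightarrow> nat \<Rightarrow> nat" where
  "degree V E v = card {w \<in> V. E v w}"

definition min_degree :: "nat set \<Rightarrow> (nat \<Rightarrow> nat \<Rightarrow> bool) \<Rightarrow> nat" where
  "min_degree V E = Min (degree V E ` V)"

end

theory Submission
  imports Defs begin

lemma inner_sum:
  fixes S V :: "'a set"
  assumes fin: "finite V" and SV: "S \<subseteq> V" and xsV: "set xs \<subseteq> V"
  shows "(\<Sum>x\<in>V. (1/2::real) ^ card (S \<inter> set (x#xs)))
         \<le> (1/2) ^ card (S \<inter> set xs) * (real (card V) - (real (card S) - real (length xs)) / 2)"
proof -
  define T where "T = S - set xs"
  define d where "d = (1/2::real) ^ card (S \<inter> set xs)"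
  have TV: "T \<subseteq> V" using SV T_def by auto
  have finS: "finite S" using fin SV finite_subset by auto
  have A: "\<And>x. x \<in> T \<Longrightarrow> (1/2::real) ^ card (S \<inter> set (x#xs)) = d / 2"
  proof -
    fix x assume "x \<in> T"
    then have "S \<inter> set (x#xs) = insert x (S \<inter> set xs)" "x \<notin> S \<inter> set xs" using T_def by auto
    then show "(1/2::real) ^ card (S \<inter> set (x#xs)) = d / 2" using d_def by simp
  qed
  have B: "\<And>x. x \<in> V - T \<Longrightarrow> (1/2::real) ^ card (S \<inter> set (x#xs)) = d"
  proof -
    fix x assume "x \<in> V - T"
    then have "S \<inter> set (x#xs) = S \<inter> set xs" using T_def by auto
    then show "(1/2::real) ^ card (S \<inter> set (x#xs)) = d" using d_def by simp
  qed
  have "(\<Sum>x\<in>V. (1/2::real) ^ card (S \<inter> set (x#xs)))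
      = (\<Sum>x\<in>T. (1/2::real) ^ card (S \<inter> set (x#xs))) + (\<Sum>x\<in>V - T. (1/2::real) ^ card (S \<inter> set (x#xs)))"
    by (metis sum.subset_diff[OF TV fin] add.commute)
  also have "\<dots> = real (card T) * (d/2) + real (card (V - T)) * d"
    using sum.cong[OF refl A, of T] sum.cong[OF refl B, of "V - T"] by simp
  also have "real (card (V - T)) = real (card V) - real (card T)"
    using card_Diff_subset[OF finite_subset[OF TV fin] TV] card_mono[OF fin TV] by simp
  finally have eq: "(\<Sum>x\<in>V. (1/2::real) ^ card (S \<inter> set (x#xs))) = d * (real (card V) - real (card T) / 2)"
    by (simp add: algebra_simps)
  have "card T = card S - card (S \<inter> set xs)"
    unfolding T_def using card_Diff_subset[of "S \<inter> set xs" S] by (metis Diff_Int2 Diff_Int_distrib2 Int_lower1 finite_Int List.finite_set inf.idem Diff_Int card_Diff_subset_Int finS)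
  moreover have "card (S \<inter> set xs) \<le> card S" using finS by (simp add: card_mono)
  moreover have "card (S \<inter> set xs) \<le> length xs"
    by (meson List.finite_set card_length card_mono inf_le2 order_trans)
  ultimately have "real (card T) \<ge> real (card S) - real (length xs)" by linarith
  moreover have "d \<ge> 0" using d_def by simp
  ultimately show ?thesis using eq d_def
    by (simp add: mult_left_mono)
qed

lemma weight_sum:
  fixes S V :: "'a set"
  assumes fin: "finite V" and SV: "S \<subseteq> V"
  shows "j \<le> m \<Longrightarrow> (\<Sum>xs\<in>{xs. set xs \<subseteq> V \<and> length xs = j}. (1/2::real) ^ card (S \<inter> set xs))
         \<le> (real (card V) - (real (card S) - real m) / 2) ^ j"
proof (induction j)
  case 0
  have "{xs. set xs \<subseteq> V \<and> length xs = 0} = {[]}" by auto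
  then show ?case by simp
next
  case (Suc j)
  define B where "B = real (card V) - (real (card S) - real m) / 2"
  have SVc: "card S \<le> card V" using card_mono[OF fin SV] .
  have B0: "B \<ge> 0" using SVc B_def by simp
  let ?L = "{xs. set xs \<subseteq> V \<and> length xs = j}"
  have finL: "finite ?L" using finite_lists_length_eq[OF fin] .
  have "(\<Sum>xs\<in>{xs. set xs \<subseteq> V \<and> length xs = Suc j}. (1/2::real) ^ card (S \<inter> set xs))
      = (\<Sum>p\<in>?L \<times> V. (1/2::real) ^ card (S \<inter> set ((\<lambda>(xs, n). n#xs) p)))"
    unfolding lists_length_Suc_eq
    by (subst sum.reindex) (auto simp: inj_on_def)
  also have "\<dots> = (\<Sum>xs\<in>?L. \<Sum>x\<in>V. (1/2::real) ^ card (S \<inter> set (x#xs)))"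
    by (simp add: sum.cartesian_product split_def)
  also have "\<dots> \<le> (\<Sum>xs\<in>?L. (1/2) ^ card (S \<inter> set xs) * B)"
  proof (rule sum_mono)
    fix xs assume xs: "xs \<in> ?L"
    have "(\<Sum>x\<in>V. (1/2::real) ^ card (S \<inter> set (x#xs)))
         \<le> (1/2) ^ card (S \<inter> set xs) * (real (card V) - (real (card S) - real (length xs)) / 2)"
      using inner_sum[OF fin SV] xs by auto
    also have "\<dots> \<le> (1/2) ^ card (S \<inter> set xs) * B"
      using xs Suc.prems B_def by (intro mult_left_mono) auto
    finally show "(\<Sum>x\<in>V. (1/2::real) ^ card (S \<inter> set (x#xs))) \<le> (1/2) ^ card (S \<inter> set xs) * B" .
  qed
  also have "\<dots> = B * (\<Sum>xs\<in>?L. (1/2) ^ card (S \<inter> set xs))"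
    by (simp add: sum_distrib_left mult.commute)
  also have "\<dots> \<le> B * B ^ j"
    using Suc B_def B0 by (intro mult_left_mono) auto
  finally show ?case using B_def by simp
qed

lemma ln2_le: "ln 2 \<le> (3/4::real)"
proof -
  have "(1 + (3/4) / real (8::nat)) ^ 8 \<le> exp (3/4::real)"
    by (rule exp_ge_one_plus_x_over_n_power_n) auto
  moreover have "(2::real) \<le> (1 + (3/4) / real (8::nat)) ^ 8" by (simp add: eval_nat_numeral divide_simps)
  ultimately have "2 \<le> exp (3/4::real)" by linarith
  then show ?thesis by (metis exp_gt_zero exp_le_cancel_iff exp_ln zero_less_numeral order.trans less_imp_le ln_le_cancel_iff ln_exp)
qed

lemma bad_count:
  fixes S V :: "'a set"
  assumes fin: "finite V" and SV: "S \<subseteq> V"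
  shows "real (card {xs\<in>{xs. set xs \<subseteq> V \<and> length xs = m}. real (card (S \<inter> set xs)) < k})
         \<le> 2 powr k * (real (card V) - (real (card S) - real m) / 2) ^ m"
proof -
  let ?L = "{xs. set xs \<subseteq> V \<and> length xs = m}"
  let ?B = "{xs\<in>?L. real (card (S \<inter> set xs)) < k}"
  have finL: "finite ?L" using finite_lists_length_eq[OF fin] .
  have "real (card ?B) = (\<Sum>xs\<in>?B. 1)" by simp
  also have "\<dots> \<le> (\<Sum>xs\<in>?B. 2 powr k * (1/2::real) ^ card (S \<inter> set xs))"
  proof (rule sum_mono)
    fix xs assume xs: "xs \<in> ?B"
    have "(1/2::real) ^ card (S \<inter> set xs) = 1 / 2 powr real (card (S \<inter> set xs))"
      by (simp add: powr_realpow power_one_over)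
    then have "2 powr k * (1/2::real) ^ card (S \<inter> set xs) = 2 powr (k - real (card (S \<inter> set xs)))"
      by (simp add: powr_diff)
    moreover have "1 \<le> 2 powr (k - real (card (S \<inter> set xs)))"
      using xs by (intro ge_one_powr_ge_zero) auto
    ultimately show "1 \<le> 2 powr k * (1/2::real) ^ card (S \<inter> set xs)" by simp
  qed
  also have "\<dots> \<le> (\<Sum>xs\<in>?L. 2 powr k * (1/2::real) ^ card (S \<inter> set xs))"
    by (rule sum_mono2[OF finL]) auto
  also have "\<dots> = 2 powr k * (\<Sum>xs\<in>?L. (1/2::real) ^ card (S \<inter> set xs))"
    by (simp add: sum_distrib_left)
  also have "\<dots> \<le> 2 powr k * (real (card V) - (real (card S) - real m) / 2) ^ m"
    using weight_sum[OF fin SV, of m m] by (intro mult_left_mono) auto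
  finally show ?thesis .
qed

lemma eventually_large:
  fixes \<epsilon> :: real
  assumes "\<epsilon> > 0"
  shows "\<exists>N::nat. \<forall>n\<ge>N. n \<ge> 2 \<and> ln (real n) > 2 * \<epsilon> \<and> ln (real n) / real n < \<epsilon>^2 / 144"
proof -
  have f1: "filterlim (\<lambda>n. ln (real n)) at_top sequentially"
    by (rule filterlim_compose[OF ln_at_top filterlim_real_sequentially])
  have e1: "eventually (\<lambda>n. ln (real n) > 2 * \<epsilon>) sequentially"
    using f1 unfolding filterlim_at_top_dense by blast
  have f2: "((\<lambda>n. ln (real n) / real n) \<longlongrightarrow> 0) sequentially"
    by (rule filterlim_compose[OF ln_x_over_x_tendsto_0 filterlim_real_sequentially])
  have e2: "eventually (\<lambda>n. ln (real n) / real n < \<epsilon>^2 / 144) sequentially"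
    using order_tendstoD(2)[OF f2, of "\<epsilon>^2 / 144"] assms by (simp del: times_divide_eq_left divide_divide_eq_left)
  have e3: "eventually (\<lambda>n. n \<ge> (2::nat)) sequentially" by (rule eventually_ge_at_top)
  have "eventually (\<lambda>n. n \<ge> 2 \<and> ln (real n) > 2 * \<epsilon> \<and> ln (real n) / real n < \<epsilon>^2 / 144) sequentially"
    using e1 e2 e3 by eventually_elim auto
  then show ?thesis unfolding eventually_sequentially by blast
qed

lemma key_ineq:
  fixes \<epsilon> l m n :: real
  assumes e: "\<epsilon> > 0" and n: "n > 0" and l: "l > 2 * \<epsilon>" and ln: "l / n < \<epsilon>^2 / 144"
    and m1: "12 / \<epsilon> * l - 1 \<le> m" and m2: "m \<le> 12 / \<epsilon> * l" and m0: "0 \<le> m"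
  shows "2 * l + l * ln 2 * 12 - \<epsilon> * m + m^2 / (2 * n) < 0"
proof -
  have l0: "l > 0" using l e by simp
  have a: "\<epsilon> * m \<ge> 12 * l - \<epsilon>"
    using mult_left_mono[OF m1, of \<epsilon>] e by (simp add: algebra_simps)
  have "m^2 \<le> (12 / \<epsilon> * l)^2" using m0 m2 by (intro power_mono) auto
  then have "m^2 / (2 * n) \<le> (12 / \<epsilon> * l)^2 / (2 * n)" using n by (intro divide_right_mono) auto
  also have "(12 / \<epsilon> * l)^2 / (2 * n) = 72 * l / \<epsilon>^2 * (l / n)"
    using e n by (simp add: field_simps power2_eq_square)
  also have "\<dots> < 72 * l / \<epsilon>^2 * (\<epsilon>^2 / 144)"
    using ln l0 e by (intro mult_strict_left_mono) auto
  also have "\<dots> = l / 2" using e by (simp add: field_simps power2_eq_square)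
  finally have b: "m^2 / (2 * n) < l / 2" .
  have c: "l * ln 2 * 12 \<le> 9 * l" using mult_left_mono[OF ln2_le, of l] l0 by simp
  show ?thesis using a b c l by linarith
qed

theorem lemma1:
  fixes \<epsilon> :: real
  assumes "\<epsilon> > 0"
  shows "\<exists>N::nat. \<forall>(V::nat set) E n. simple_graph V E \<longrightarrow> card V = n \<longrightarrow> n \<ge> N \<longrightarrow>
           real (min_degree V E) \<ge> (1/2 + \<epsilon>) * real n \<longrightarrow>
           (\<exists>L \<subseteq> V. real (card L) \<le> (12 / \<epsilon>) * ln (real n) \<and>
              (\<forall>u \<in> V - L. \<forall>v \<in> V - L. u \<noteq> v \<longrightarrow>
                  real (card {w \<in> L. E u w \<and> E v w}) \<ge> 12 * ln (real n)))"
proof -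
  obtain N :: nat where HN: "\<forall>n\<ge>N. n \<ge> 2 \<and> ln (real n) > 2 * \<epsilon> \<and> ln (real n) / real n < \<epsilon>^2 / 144"
    using eventually_large[OF assms] by blast
  show ?thesis
  proof (rule exI[of _ N], intro allI impI)
    fix V :: "nat set" and E n
    assume G: "simple_graph V E" and cV: "card V = n" and nN: "n \<ge> N"
      and md: "real (min_degree V E) \<ge> (1/2 + \<epsilon>) * real n"
    have n2: "n \<ge> 2" and lbig: "ln (real n) > 2 * \<epsilon>" and lsmall: "ln (real n) / real n < \<epsilon>^2 / 144"
      using HN nN by auto
    have fin: "finite V" using G unfolding simple_graph_def by auto
    define l where "l = ln (real n)"
    define m where "m = nat \<lfloor>12 / \<epsilon> * l\<rfloor>"
    have l0: "l > 0" using lbig assms l_def by simp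
    have m0: "12 / \<epsilon> * l \<ge> 0" using l0 assms by simp
    have m1: "12 / \<epsilon> * l - 1 \<le> real m" using m0 unfolding m_def by linarith
    have m2: "real m \<le> 12 / \<epsilon> * l" using m0 unfolding m_def by linarith
    define S where "S = (\<lambda>u v. {w\<in>V. E u w \<and> E v w})"
    define K where "K = 12 * l"
    have SV: "\<And>u v. S u v \<subseteq> V" unfolding S_def by auto
    have Sbig: "real (card (S u v)) \<ge> 2 * \<epsilon> * real n" if "u \<in> V" "v \<in> V" for u v
    proof -
      have dg: "real (card {w\<in>V. E x w}) \<ge> (1/2 + \<epsilon>) * real n" if "x \<in> V" for x
      proof -
        have "min_degree V E \<le> degree V E x"
          unfolding min_degree_def using fin that by (intro Min_le) auto
        then show ?thesis using md unfolding degree_def by linarith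
      qed
      have eq: "S u v = {w\<in>V. E u w} \<inter> {w\<in>V. E v w}" unfolding S_def by auto
      have "card ({w\<in>V. E u w} \<union> {w\<in>V. E v w}) \<le> n"
        using cV fin by (intro card_mono[of V, simplified cV]) auto
      moreover have "card ({w\<in>V. E u w} \<union> {w\<in>V. E v w}) + card ({w\<in>V. E u w} \<inter> {w\<in>V. E v w})
          = card {w\<in>V. E u w} + card {w\<in>V. E v w}"
        using fin by (intro card_Un_Int[symmetric]) auto
      ultimately show ?thesis using dg[OF that(1)] dg[OF that(2)] eq by (simp add: algebra_simps)
    qed
    let ?L = "{xs. set xs \<subseteq> V \<and> length xs = m}"
    define P where "P = {(u, v). u \<in> V \<and> v \<in> V \<and> u \<noteq> v}"
    define Bad where "Bad = (\<lambda>p. {xs\<in>?L. real (card (S (fst p) (snd p) \<inter> set xs)) < K})"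
    define Bm where "Bm = real n - (2 * \<epsilon> * real n - real m) / 2"
    have finP: "finite P" unfolding P_def by (rule finite_subset[of _ "V \<times> V"]) (auto simp: fin)
    have cardP: "card P \<le> n^2"
    proof -
      have "card P \<le> card (V \<times> V)" unfolding P_def using fin by (intro card_mono) auto
      then show ?thesis using cV by (simp add: card_cartesian_product power2_eq_square)
    qed
    have bp: "real (card (Bad p)) \<le> 2 powr K * Bm ^ m" if pP: "p \<in> P" for p
    proof -
      obtain u v where p: "p = (u, v)" "u \<in> V" "v \<in> V" using pP P_def by auto
      have "real (card (Bad p)) \<le> 2 powr K * (real (card V) - (real (card (S u v)) - real m) / 2) ^ m"
        unfolding Bad_def p using bad_count[OF fin SV] by simp
      also have "\<dots> \<le> 2 powr K * Bm ^ m"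
      proof (intro mult_left_mono power_mono)
        show "real (card V) - (real (card (S u v)) - real m) / 2 \<le> Bm"
          using Sbig[OF p(2,3)] cV Bm_def by simp
        have "card (S u v) \<le> card V" using card_mono[OF fin SV] .
        then show "0 \<le> real (card V) - (real (card (S u v)) - real m) / 2" by simp
      qed auto
      finally show ?thesis .
    qed
    have Bm0: "Bm \<ge> 0"
    proof -
      have "2 * \<epsilon> * real n \<le> real n"
      proof -
        obtain u where "u \<in> V" using n2 cV by fastforce
        then have "2 * \<epsilon> * real n \<le> real (card (S u u))" using Sbig by blast
        also have "\<dots> \<le> real n" using card_mono[OF fin SV] cV by simp
        finally show ?thesis .
      qed
      then show ?thesis using Bm_def by simp
    qed
    have nr: "real n > 0" using n2 by simp
    have Bm_le: "Bm \<le> real n * exp (-(\<epsilon> - real m / (2 * real n)))"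
    proof -
      have "Bm = real n * (1 + (-(\<epsilon> - real m / (2 * real n))))"
        unfolding Bm_def using nr by (simp add: field_simps)
      also have "\<dots> \<le> real n * exp (-(\<epsilon> - real m / (2 * real n)))"
        using nr by (intro mult_left_mono exp_ge_add_one_self) auto
      finally show ?thesis .
    qed
    have "Bm ^ m \<le> (real n * exp (-(\<epsilon> - real m / (2 * real n)))) ^ m"
      using Bm0 Bm_le by (intro power_mono) auto
    also have "\<dots> = real n ^ m * exp (-(\<epsilon> - real m / (2 * real n)) * real m)"
      by (simp only: power_mult_distrib exp_of_nat_mult[symmetric] mult_ac)
    finally have Bmm: "Bm ^ m \<le> real n ^ m * exp (-(\<epsilon> - real m / (2 * real n)) * real m)" .
    have cardBad: "real (card (\<Union>p\<in>P. Bad p)) \<le> real (n^2) * (2 powr K * Bm ^ m)"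
    proof -
      have "card (\<Union>p\<in>P. Bad p) \<le> (\<Sum>p\<in>P. card (Bad p))" by (rule card_UN_le[OF finP])
      then have "real (card (\<Union>p\<in>P. Bad p)) \<le> (\<Sum>p\<in>P. real (card (Bad p)))"
        by (metis of_nat_le_iff of_nat_sum)
      also have "\<dots> \<le> (\<Sum>p\<in>P. 2 powr K * Bm ^ m)" using bp by (rule sum_mono)
      also have "\<dots> = real (card P) * (2 powr K * Bm ^ m)" by simp
      also have "\<dots> \<le> real (n^2) * (2 powr K * Bm ^ m)"
        using cardP Bm0 by (intro mult_right_mono) auto
      finally show ?thesis .
    qed
    have key: "2 * l + l * ln 2 * 12 - \<epsilon> * real m + (real m)^2 / (2 * real n) < 0"
      using key_ineq[OF assms nr _ _ m1 m2] lbig lsmall l_def by simp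
    have "real (n^2) * (2 powr K * Bm ^ m)
        \<le> real (n^2) * (2 powr K * (real n ^ m * exp (-(\<epsilon> - real m / (2 * real n)) * real m)))"
      using Bmm by (intro mult_left_mono) auto
    also have "\<dots> = real n ^ m * exp (2 * l + l * ln 2 * 12 - \<epsilon> * real m + (real m)^2 / (2 * real n))"
    proof -
      have "ln (real n ^ 2) = 2 * l" using nr by (simp add: ln_realpow l_def)
      then have e1: "real (n^2) = exp (2 * l)" using nr by (metis exp_ln of_nat_power zero_less_power)
      have e2: "2 powr K = exp (l * ln 2 * 12)" unfolding K_def powr_def by (simp add: mult_ac)
      define Y where "Y = -(\<epsilon> - real m / (2 * real n)) * real m"
      have "real (n^2) * (2 powr K * (real n ^ m * exp Y))
          = real n ^ m * (exp (2 * l) * exp (l * ln 2 * 12) * exp Y)"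
        by (simp only: e1 e2 mult_ac)
      also have "\<dots> = real n ^ m * exp (2 * l + l * ln 2 * 12 + Y)"
        by (simp only: exp_add)
      also have "\<dots> = real n ^ m * exp (2 * l + l * ln 2 * 12 - \<epsilon> * real m + (real m)^2 / (2 * real n))"
        by (rule arg_cong[where f="\<lambda>z. real n ^ m * exp z"]) (simp add: Y_def algebra_simps power2_eq_square)
      finally show ?thesis unfolding Y_def .
    qed
    also have "\<dots> < real n ^ m" using key nr by simp
    finally have lt: "real (n^2) * (2 powr K * Bm ^ m) < real n ^ m" .
    have "real (card (\<Union>p\<in>P. Bad p)) < real n ^ m" using lt cardBad by linarith
    then have "real (card (\<Union>p\<in>P. Bad p)) < real (card ?L)"
      using card_lists_length_eq[OF fin, of m] cV by (simp only: of_nat_power)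
    then have "card (\<Union>p\<in>P. Bad p) < card ?L" by (simp only: of_nat_less_iff)
    have "\<not> ?L \<subseteq> (\<Union>p\<in>P. Bad p)"
    proof
      assume "?L \<subseteq> (\<Union>p\<in>P. Bad p)"
      moreover have "finite (\<Union>p\<in>P. Bad p)"
        by (rule finite_subset[of _ ?L]) (auto simp: Bad_def finite_lists_length_eq[OF fin])
      ultimately have "card ?L \<le> card (\<Union>p\<in>P. Bad p)" by (rule card_mono[rotated])
      then show False using \<open>card (\<Union>p\<in>P. Bad p) < card ?L\<close> by simp
    qed
    then obtain xs where xs: "xs \<in> ?L" "xs \<notin> (\<Union>p\<in>P. Bad p)" by blast
    show "\<exists>L \<subseteq> V. real (card L) \<le> (12 / \<epsilon>) * ln (real n) \<and>
              (\<forall>u \<in> V - L. \<forall>v \<in> V - L. u \<noteq> v \<longrightarrow>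
                  real (card {w \<in> L. E u w \<and> E v w}) \<ge> 12 * ln (real n))"
    proof (rule exI[of _ "set xs"], intro conjI ballI impI)
      show "set xs \<subseteq> V" using xs by simp
      have "card (set xs) \<le> m" using xs card_length by fastforce
      then show "real (card (set xs)) \<le> 12 / \<epsilon> * ln (real n)" using m2 unfolding l_def by (metis of_nat_le_iff order.trans)
    next
      fix u v assume uv: "u \<in> V - set xs" "v \<in> V - set xs" "u \<noteq> v"
      then have "(u, v) \<in> P" unfolding P_def by auto
      then have "xs \<notin> Bad (u, v)" using xs by blast
      then have "\<not> real (card (S u v \<inter> set xs)) < K" using xs unfolding Bad_def by auto
      moreover have "{w \<in> set xs. E u w \<and> E v w} = S u v \<inter> set xs" unfolding S_def using xs by auto
      ultimately show "real (card {w \<in> set xs. E u w \<and> E v w}) \<ge> 12 * ln (real n)"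
        using K_def l_def by simp
    qed
  qed
qed

end
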